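(* Let $\tau$ be a distributive triangle function on $\Delta^+$, $\Sigma$ a ring of subsets of $\Omega\ne\emptyset$, $\gamma$ a $\tau$-decomposable measure on $\Sigma$, and $f,g$ simple functions with $f\le g$. Then $\int_E f\,d\gamma\ge\int_E g\,d\gamma$ for every $E\in\Sigma$.
   Context: $\Delta^+$: functions $F:[-\infty,+\infty]\to[0,1]$ non-decreasing, left-continuous on $\mathbb{R}$, $F(x)=0$ for $x\le0$, $F(+\infty)=1$, ordered pointwise; $\varepsilon_0(x)=1$ if $x>0$, else $0$. Triangle function: symmetric, associative $\tau:\Delta^+\times\Delta^+\to\Delta^+$, non-decreasing in each variable, identity $\varepsilon_0$; $G\oplus H=\tau(G,H)$, $\bigoplus_{k=1}^nG_k=\tau(G_1,\bigoplus_{k=2}^nG_k)$. $c\odot G=\varepsilon_0$ if $c=0$, $(c\odot G)(x)=G(x/c)$ if $c>0$; $\tau$ distributive if $c\odot(G\oplus H)=(c\odot G)\oplus(c\odot H)$ for all $c\ge0$. $\tau$-decomposable measure: $\gamma:\Sigma\to\Delta^+$ with $\gamma_\emptyset=\varepsilon_0$, $\gamma_{A\cup B}=\tau(\gamma_A,\gamma_B)$ for disjoint $A,B\in\Sigma$. A simple function is $f=\sum_{i=1}^nx_i\chi_{E_i}$ with $x_i\in[0,\infty)$ and $E_i\in\Sigma$ pairwise disjoint, and $\int_Ef\,d\gamma=\bigoplus_{i=1}^nx_i\odot\gamma_{E\cap E_i}$ (independent of the representation). *)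

theory Defs
  imports "HOL-Analysis.Analysis"
begin

type_synonym dfun = "ereal \<Rightarrow> real"

definition DeltaPlus :: "dfun set" where
  "DeltaPlus = {F. (\<forall>x. 0 \<le> F x \<and> F x \<le> 1) \<and> mono F
     \<and> (\<forall>x::real. ((\<lambda>t. F (ereal t)) \<longlongrightarrow> F (ereal x)) (at_left x))
     \<and> (\<forall>x. x \<le> 0 \<longrightarrow> F x = 0) \<and> F PInfty = 1}"

definition eps0 :: dfun where
  "eps0 x = (if x > 0 then 1 else 0)"

definition triangle_function :: "(dfun \<Rightarrow> dfun \<Rightarrow> dfun) \<Rightarrow> bool" where
  "triangle_function \<tau> \<longleftrightarrow>
     (\<forall>G\<in>DeltaPlus. \<forall>H\<in>DeltaPlus. \<tau> G H \<in> DeltaPlus)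
   \<and> (\<forall>G\<in>DeltaPlus. \<forall>H\<in>DeltaPlus. \<tau> G H = \<tau> H G)
   \<and> (\<forall>G\<in>DeltaPlus. \<forall>H\<in>DeltaPlus. \<forall>K\<in>DeltaPlus. \<tau> G (\<tau> H K) = \<tau> (\<tau> G H) K)
   \<and> (\<forall>G\<in>DeltaPlus. \<forall>G'\<in>DeltaPlus. \<forall>H\<in>DeltaPlus. G \<le> G' \<longrightarrow> \<tau> G H \<le> \<tau> G' H)
   \<and> (\<forall>G\<in>DeltaPlus. \<tau> G eps0 = G)"

definition smult :: "real \<Rightarrow> dfun \<Rightarrow> dfun" where
  "smult c G = (if c = 0 then eps0 else (\<lambda>x. G (x / ereal c)))"

definition distributive_tf :: "(dfun \<Rightarrow> dfun \<Rightarrow> dfun) \<Rightarrow> bool" where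
  "distributive_tf \<tau> \<longleftrightarrow> (\<forall>c\<ge>0. \<forall>G\<in>DeltaPlus. \<forall>H\<in>DeltaPlus.
      smult c (\<tau> G H) = \<tau> (smult c G) (smult c H))"

definition tau_decomposable :: "(dfun \<Rightarrow> dfun \<Rightarrow> dfun) \<Rightarrow> 'a set set \<Rightarrow> ('a set \<Rightarrow> dfun) \<Rightarrow> bool" where
  "tau_decomposable \<tau> \<Sigma> \<gamma> \<longleftrightarrow> (\<forall>A\<in>\<Sigma>. \<gamma> A \<in> DeltaPlus) \<and> \<gamma> {} = eps0
     \<and> (\<forall>A\<in>\<Sigma>. \<forall>B\<in>\<Sigma>. A \<inter> B = {} \<longrightarrow> \<gamma> (A \<union> B) = \<tau> (\<gamma> A) (\<gamma> B))"

fun bigoplus :: "(dfun \<Rightarrow> dfun \<Rightarrow> dfun) \<Rightarrow> dfun list \<Rightarrow> dfun" where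
  "bigoplus \<tau> [] = eps0"
| "bigoplus \<tau> [G] = G"
| "bigoplus \<tau> (G # H # Gs) = \<tau> G (bigoplus \<tau> (H # Gs))"

definition simple_rep :: "'a set \<Rightarrow> 'a set set \<Rightarrow> ('a \<Rightarrow> real) \<Rightarrow> (real \<times> 'a set) list \<Rightarrow> bool" where
  "simple_rep \<Omega> \<Sigma> f rep \<longleftrightarrow>
     (\<forall>i<length rep. fst (rep ! i) \<ge> 0 \<and> snd (rep ! i) \<in> \<Sigma>)
   \<and> disjoint_family_on (\<lambda>i. snd (rep ! i)) {..<length rep}
   \<and> (\<forall>\<omega>\<in>\<Omega>. f \<omega> = (\<Sum>i<length rep. fst (rep ! i) * indicator (snd (rep ! i)) \<omega>))"

definition simple_fun :: "'a set \<Rightarrow> 'a set set \<Rightarrow> ('a \<Rightarrow> real) \<Rightarrow> bool" where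
  "simple_fun \<Omega> \<Sigma> f \<longleftrightarrow> (\<exists>rep. simple_rep \<Omega> \<Sigma> f rep)"

text \<open>The integral, computed from some representation (the paper asserts independence of it).\<close>
definition tau_integral ::
  "(dfun \<Rightarrow> dfun \<Rightarrow> dfun) \<Rightarrow> 'a set \<Rightarrow> 'a set set \<Rightarrow> ('a set \<Rightarrow> dfun) \<Rightarrow> 'a set \<Rightarrow> ('a \<Rightarrow> real) \<Rightarrow> dfun" where
  "tau_integral \<tau> \<Omega> \<Sigma> \<gamma> E f =
     (let rep = (SOME rep. simple_rep \<Omega> \<Sigma> f rep)
      in bigoplus \<tau> (map (\<lambda>(x, A). smult x (\<gamma> (E \<inter> A))) rep))"

end

theory Submission
  imports Defs
begin



lemma eps0_D: "eps0 \<in> DeltaPlus"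
proof -
  have "((\<lambda>t. eps0 (ereal t)) \<longlongrightarrow> eps0 (ereal x)) (at_left x)" for x::real
  proof (cases "x > 0")
    case True
    have "eventually (\<lambda>t. eps0 (ereal t) = eps0 (ereal x)) (at_left x)"
      using eventually_at_left_real[OF True] True by (auto simp: eps0_def elim!: eventually_mono)
    then show ?thesis by (rule tendsto_eventually)
  next
    case False
    have "eventually (\<lambda>t. eps0 (ereal t) = eps0 (ereal x)) (at_left x)"
      using False by (auto simp: eps0_def eventually_at_filter)
    then show ?thesis by (rule tendsto_eventually)
  qed
  moreover have "mono eps0" by (auto simp: mono_def eps0_def)
  ultimately show ?thesis by (auto simp: DeltaPlus_def eps0_def)
qed

lemma le_eps0: "G \<in> DeltaPlus \<Longrightarrow> G \<le> eps0"
  by (auto simp: le_fun_def DeltaPlus_def eps0_def not_less)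

lemma smult_eps0: "c \<ge> 0 \<Longrightarrow> smult c eps0 = eps0"
proof -
  assume c: "c \<ge> 0"
  have "(x / ereal c > 0) = (x > 0)" if "c > 0" for x
    using that by (cases x) (auto simp: field_simps)
  then show ?thesis using c by (auto simp: smult_def eps0_def fun_eq_iff)
qed

lemma ediv_mono: "c > 0 \<Longrightarrow> x \<le> y \<Longrightarrow> x / ereal c \<le> y / ereal c"
  by (cases x; cases y) (auto simp: divide_right_mono)

lemma smult_D: assumes "c \<ge> 0" "G \<in> DeltaPlus" shows "smult c G \<in> DeltaPlus"
proof (cases "c = 0")
  case True then show ?thesis by (simp add: smult_def eps0_D)
next
  case False
  with assms have c: "c > 0" by simp
  have G: "\<forall>x. 0 \<le> G x \<and> G x \<le> 1" "mono G"
     "\<forall>x::real. ((\<lambda>t. G (ereal t)) \<longlongrightarrow> G (ereal x)) (at_left x)"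
     "\<forall>x. x \<le> 0 \<longrightarrow> G x = 0" "G PInfty = 1" using assms(2) by (auto simp: DeltaPlus_def)
  have m: "mono (\<lambda>x. G (x / ereal c))" using G(2) c by (auto simp: mono_def ediv_mono)
  have lc: "((\<lambda>t. G (ereal t / ereal c)) \<longlongrightarrow> G (ereal x / ereal c)) (at_left x)" for x::real
  proof -
    have f: "filterlim (\<lambda>t. t / c) (at_left (x / c)) (at_left x)"
    proof (rule tendsto_imp_filterlim_at_left)
      show "((\<lambda>t. t / c) \<longlongrightarrow> x / c) (at_left x)" using c by (auto intro!: tendsto_intros)
      show "\<forall>\<^sub>F t in at_left x. t / c < x / c"
        using c by (auto simp: eventually_at_filter divide_strict_right_mono)
    qed
    have "((\<lambda>t. G (ereal (t/c))) \<longlongrightarrow> G (ereal (x/c))) (at_left x)"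
      using filterlim_compose[OF G(3)[rule_format, of "x/c"] f] by simp
    then show ?thesis using c by simp
  qed
  have z: "x \<le> 0 \<Longrightarrow> x / ereal c \<le> 0" for x using c by (cases x) (auto simp: divide_nonpos_pos)
  show ?thesis using c G m lc z by (auto simp: DeltaPlus_def smult_def)
qed

lemma smult_mono: "G \<le> H \<Longrightarrow> smult c G \<le> smult c H"
  by (auto simp: smult_def le_fun_def)

lemma smult_anti: assumes "0 \<le> c" "c \<le> d" "G \<in> DeltaPlus" shows "smult d G \<le> smult c G"
proof (cases "c = 0")
  case True
  have "smult d G \<in> DeltaPlus" using assms by (intro smult_D) auto
  then show ?thesis using True le_eps0 by (simp add: smult_def)
next
  case False
  hence c: "c > 0" "d > 0" using assms by auto
  have "G (x / ereal d) \<le> G (x / ereal c)" for x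
  proof (cases "x > 0")
    case True
    have "x / ereal d \<le> x / ereal c" using True c assms(2)
      by (cases x) (auto simp: frac_le)
    then show ?thesis using assms(3) by (auto simp: DeltaPlus_def mono_def)
  next
    case False
    then have "x / ereal d \<le> 0" using c by (cases x) (auto simp: divide_nonpos_pos)
    then show ?thesis using assms(3) by (auto simp: DeltaPlus_def)
  qed
  then show ?thesis using c by (auto simp: smult_def le_fun_def)
qed




context
  fixes \<tau> :: "dfun \<Rightarrow> dfun \<Rightarrow> dfun"
  assumes tf: "triangle_function \<tau>" and dist: "distributive_tf \<tau>"
begin

lemmas tfu = tf[unfolded triangle_function_def]
lemmas tf_parts = conjunct1[OF tfu] conjunct1[OF conjunct2[OF tfu]]
  conjunct1[OF conjunct2[OF conjunct2[OF tfu]]]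
  conjunct1[OF conjunct2[OF conjunct2[OF conjunct2[OF tfu]]]]
  conjunct2[OF conjunct2[OF conjunct2[OF conjunct2[OF tfu]]]]

lemma t_D: "G \<in> DeltaPlus \<Longrightarrow> H \<in> DeltaPlus \<Longrightarrow> \<tau> G H \<in> DeltaPlus"
  using tf_parts(1) by blast
lemma t_comm: "G \<in> DeltaPlus \<Longrightarrow> H \<in> DeltaPlus \<Longrightarrow> \<tau> G H = \<tau> H G"
  using tf_parts(2) by blast
lemma t_assoc: "G \<in> DeltaPlus \<Longrightarrow> H \<in> DeltaPlus \<Longrightarrow> K \<in> DeltaPlus \<Longrightarrow> \<tau> G (\<tau> H K) = \<tau> (\<tau> G H) K"
  using tf_parts(3) by blast
lemma t_mono1: "G \<in> DeltaPlus \<Longrightarrow> G' \<in> DeltaPlus \<Longrightarrow> H \<in> DeltaPlus \<Longrightarrow> G \<le> G' \<Longrightarrow> \<tau> G H \<le> \<tau> G' H"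
  using tf_parts(4) by blast
lemma t_unit: "G \<in> DeltaPlus \<Longrightarrow> \<tau> G eps0 = G"
  using tf_parts(5) by blast
lemma t_mono: "G \<in> DeltaPlus \<Longrightarrow> G' \<in> DeltaPlus \<Longrightarrow> H \<in> DeltaPlus \<Longrightarrow> H' \<in> DeltaPlus
   \<Longrightarrow> G \<le> G' \<Longrightarrow> H \<le> H' \<Longrightarrow> \<tau> G H \<le> \<tau> G' H'"
proof -
  assume a: "G \<in> DeltaPlus" "G' \<in> DeltaPlus" "H \<in> DeltaPlus" "H' \<in> DeltaPlus" "G \<le> G'" "H \<le> H'"
  have "\<tau> G H \<le> \<tau> G' H" using a by (intro t_mono1) auto
  also have "\<tau> G' H = \<tau> H G'" using a by (intro t_comm) auto
  also have "\<dots> \<le> \<tau> H' G'" using a by (intro t_mono1) auto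
  also have "\<dots> = \<tau> G' H'" using a by (intro t_comm) auto
  finally show ?thesis .
qed
lemma t_dist: "c \<ge> 0 \<Longrightarrow> G \<in> DeltaPlus \<Longrightarrow> H \<in> DeltaPlus \<Longrightarrow> smult c (\<tau> G H) = \<tau> (smult c G) (smult c H)"
  using dist unfolding distributive_tf_def by blast

lemma bo_foldr: "set xs \<subseteq> DeltaPlus \<Longrightarrow> bigoplus \<tau> xs = foldr \<tau> xs eps0"
  by (induction xs rule: induct_list012) (auto simp: t_unit)

lemma foldr_D: "set xs \<subseteq> DeltaPlus \<Longrightarrow> foldr \<tau> xs eps0 \<in> DeltaPlus"
  by (induction xs) (auto simp: eps0_D t_D)

lemma foldr_split:
  assumes "\<And>i. i \<in> set xs \<Longrightarrow> a i \<in> DeltaPlus \<and> b i \<in> DeltaPlus"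
  shows "foldr \<tau> (map (\<lambda>i. \<tau> (a i) (b i)) xs) eps0
       = \<tau> (foldr \<tau> (map a xs) eps0) (foldr \<tau> (map b xs) eps0)"
  using assms
proof (induction xs)
  case Nil then show ?case by (simp add: t_unit eps0_D)
next
  case (Cons i xs)
  define A where "A = foldr \<tau> (map a xs) eps0"
  define B where "B = foldr \<tau> (map b xs) eps0"
  have D: "A \<in> DeltaPlus" "B \<in> DeltaPlus" "a i \<in> DeltaPlus" "b i \<in> DeltaPlus"
    using Cons.prems by (auto simp: A_def B_def intro!: foldr_D)
  have "\<tau> (\<tau> (a i) (b i)) (\<tau> A B) = \<tau> (\<tau> (a i) A) (\<tau> (b i) B)"
  proof -
    note D' = D t_D[OF D(1) D(2)] t_D[OF D(4) D(2)] t_D[OF D(2) D(4)]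
    have "\<tau> (\<tau> (a i) (b i)) (\<tau> A B) = \<tau> (a i) (\<tau> (b i) (\<tau> A B))"
      by (rule t_assoc[symmetric]) (fact D')+
    also have "\<tau> (b i) (\<tau> A B) = \<tau> (\<tau> (b i) A) B"
      by (rule t_assoc) (fact D')+
    also have "\<tau> (b i) A = \<tau> A (b i)"
      by (rule t_comm) (fact D')+
    also have "\<tau> (\<tau> A (b i)) B = \<tau> A (\<tau> (b i) B)"
      by (rule t_assoc[symmetric]) (fact D')+
    also have "\<tau> (a i) (\<tau> A (\<tau> (b i) B)) = \<tau> (\<tau> (a i) A) (\<tau> (b i) B)"
      by (rule t_assoc) (fact D' t_D[OF D(4) D(2)])+
    finally show ?thesis .
  qed
  then show ?case using Cons by (simp add: A_def B_def)
qed

lemma foldr_mono: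
  assumes "\<And>i. i \<in> set xs \<Longrightarrow> a i \<in> DeltaPlus \<and> b i \<in> DeltaPlus \<and> a i \<le> b i"
  shows "foldr \<tau> (map a xs) eps0 \<le> foldr \<tau> (map b xs) eps0"
  using assms
proof (induction xs)
  case (Cons i xs)
  then show ?case by (simp, intro t_mono foldr_D) auto
qed simp

lemma foldr_smult:
  assumes "c \<ge> 0" "\<And>i. i \<in> set xs \<Longrightarrow> a i \<in> DeltaPlus"
  shows "smult c (foldr \<tau> (map a xs) eps0) = foldr \<tau> (map (\<lambda>i. smult c (a i)) xs) eps0"
  using assms
proof (induction xs)
  case (Cons i xs)
  have "foldr \<tau> (map a xs) eps0 \<in> DeltaPlus" using Cons.prems by (intro foldr_D) auto
  then show ?case using Cons by (simp add: t_dist)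
qed (simp add: smult_eps0)

end



fun goodrep :: "'a set set \<Rightarrow> (real \<times> 'a set) list \<Rightarrow> bool" where
  "goodrep S [] = True"
| "goodrep S (p # r) = (0 \<le> fst p \<and> snd p \<in> S \<and> (\<forall>q\<in>set r. snd p \<inter> snd q = {}) \<and> goodrep S r)"

definition val :: "(real \<times> 'a set) list \<Rightarrow> 'a \<Rightarrow> real" where
  "val r \<omega> = (\<Sum>p\<leftarrow>r. fst p * indicator (snd p) \<omega>)"

lemma val_Nil[simp]: "val [] \<omega> = 0" by (simp add: val_def)
lemma val_Cons[simp]: "val (p # r) \<omega> = fst p * indicator (snd p) \<omega> + val r \<omega>" by (simp add: val_def)

lemma val_out: "(\<forall>p\<in>set r. \<omega> \<notin> snd p) \<Longrightarrow> val r \<omega> = 0"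
  by (induction r) auto

lemma val_in: "goodrep S r \<Longrightarrow> p \<in> set r \<Longrightarrow> \<omega> \<in> snd p \<Longrightarrow> val r \<omega> = fst p"
proof (induction r)
  case (Cons q r)
  show ?case
  proof (cases "p = q")
    case True
    then have "\<forall>p'\<in>set r. \<omega> \<notin> snd p'" using Cons.prems by auto
    then show ?thesis using True Cons.prems by (simp add: val_out)
  next
    case False
    then have "p \<in> set r" "\<omega> \<notin> snd q" using Cons.prems by auto
    then show ?thesis using Cons by simp
  qed
qed simp

lemma simple_rep_good:
  assumes "simple_rep \<Omega> S f rep"
  shows "goodrep S rep \<and> (\<forall>\<omega>\<in>\<Omega>. f \<omega> = val rep \<omega>)"
proof -
  have g: "goodrep S rep" if "\<forall>i<length rep. fst (rep ! i) \<ge> 0 \<and> snd (rep ! i) \<in> S"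
     "disjoint_family_on (\<lambda>i. snd (rep ! i)) {..<length rep}" for rep
    using that
  proof (induction rep)
    case (Cons p r)
    have 1: "\<forall>i<length r. fst (r ! i) \<ge> 0 \<and> snd (r ! i) \<in> S"
      using Cons.prems(1) by (metis Suc_less_eq length_Cons nth_Cons_Suc)
    have 2: "disjoint_family_on (\<lambda>i. snd (r ! i)) {..<length r}"
      using Cons.prems(2) unfolding disjoint_family_on_def
      by (metis Suc_less_eq lessThan_iff length_Cons nth_Cons_Suc old.nat.inject)
    have 3: "snd p \<inter> snd q = {}" if "q \<in> set r" for q
    proof -
      obtain j where j: "j < length r" "q = r ! j" using \<open>q \<in> set r\<close> by (metis in_set_conv_nth)
      have "snd ((p#r) ! 0) \<inter> snd ((p#r) ! Suc j) = {}"
        using Cons.prems(2) j unfolding disjoint_family_on_def by fastforce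
      then show ?thesis using j by simp
    qed
    have 4: "0 \<le> fst p \<and> snd p \<in> S" using Cons.prems(1) by (metis length_Cons nth_Cons_0 zero_less_Suc)
    show ?case using Cons.IH[OF 1 2] 3 4 by simp
  qed simp
  have s: "(\<Sum>i<length rep. fst (rep ! i) * indicator (snd (rep ! i)) \<omega>) = val rep \<omega>" for \<omega>
    unfolding val_def sum_list_sum_nth by (simp add: atLeast0LessThan)
  show ?thesis using assms g s unfolding simple_rep_def by auto
qed

definition U :: "(real \<times> 'a set) list \<Rightarrow> 'a set" where "U r = \<Union>(snd ` set r)"

definition I :: "(dfun \<Rightarrow> dfun \<Rightarrow> dfun) \<Rightarrow> ('a set \<Rightarrow> dfun) \<Rightarrow> 'a set \<Rightarrow> (real \<times> 'a set) list \<Rightarrow> dfun" where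
  "I \<tau> \<gamma> E r = foldr \<tau> (map (\<lambda>p. smult (fst p) (\<gamma> (E \<inter> snd p))) r) eps0"

context
  fixes \<tau> :: "dfun \<Rightarrow> dfun \<Rightarrow> dfun" and \<Omega> :: "'a set" and \<Sigma> :: "'a set set"
    and \<gamma> :: "'a set \<Rightarrow> dfun" and E :: "'a set"
  assumes tf: "triangle_function \<tau>" and dist: "distributive_tf \<tau>"
    and ring: "ring_of_sets \<Omega> \<Sigma>" and dec: "tau_decomposable \<tau> \<Sigma> \<gamma>" and E: "E \<in> \<Sigma>"
begin

lemma gD: "A \<in> \<Sigma> \<Longrightarrow> \<gamma> A \<in> DeltaPlus" using dec by (auto simp: tau_decomposable_def)
lemma gemp: "\<gamma> {} = eps0" using dec by (auto simp: tau_decomposable_def)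
lemma gun: "A \<in> \<Sigma> \<Longrightarrow> B \<in> \<Sigma> \<Longrightarrow> A \<inter> B = {} \<Longrightarrow> \<gamma> (A \<union> B) = \<tau> (\<gamma> A) (\<gamma> B)"
  using dec by (auto simp: tau_decomposable_def)

lemma Int_S: "A \<in> \<Sigma> \<Longrightarrow> B \<in> \<Sigma> \<Longrightarrow> A \<inter> B \<in> \<Sigma>"
  using ring unfolding ring_of_sets_iff by (metis Diff_Diff_Int)
lemma Diff_S: "A \<in> \<Sigma> \<Longrightarrow> B \<in> \<Sigma> \<Longrightarrow> A - B \<in> \<Sigma>"
  using ring unfolding ring_of_sets_iff by blast
lemma Un_S: "A \<in> \<Sigma> \<Longrightarrow> B \<in> \<Sigma> \<Longrightarrow> A \<union> B \<in> \<Sigma>"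
  using ring unfolding ring_of_sets_iff by blast
lemma emp_S: "{} \<in> \<Sigma>" using ring unfolding ring_of_sets_iff by blast
lemma sub_S: "A \<in> \<Sigma> \<Longrightarrow> A \<subseteq> \<Omega>" using ring unfolding ring_of_sets_iff by blast

lemma gsplit: "C \<in> \<Sigma> \<Longrightarrow> B \<in> \<Sigma> \<Longrightarrow> \<gamma> C = \<tau> (\<gamma> (C \<inter> B)) (\<gamma> (C - B))"
proof -
  assume a: "C \<in> \<Sigma>" "B \<in> \<Sigma>"
  have "C = (C \<inter> B) \<union> (C - B)" by blast
  then have "\<gamma> C = \<gamma> ((C \<inter> B) \<union> (C - B))" by simp
  also have "\<dots> = \<tau> (\<gamma> (C \<inter> B)) (\<gamma> (C - B))" using a by (intro gun Int_S Diff_S) auto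
  finally show ?thesis .
qed


lemma U_S: "goodrep \<Sigma> r \<Longrightarrow> U r \<in> \<Sigma>"
  by (induction r) (auto simp: U_def emp_S Un_S)

lemma gunion: "goodrep \<Sigma> r \<Longrightarrow> C \<in> \<Sigma> \<Longrightarrow> foldr \<tau> (map (\<lambda>p. \<gamma> (C \<inter> snd p)) r) eps0 = \<gamma> (C \<inter> U r)"
proof (induction r)
  case Nil then show ?case by (simp add: U_def gemp)
next
  case (Cons p r)
  have "C \<inter> U (p # r) = (C \<inter> snd p) \<union> (C \<inter> U r)" by (auto simp: U_def)
  moreover have "(C \<inter> snd p) \<inter> (C \<inter> U r) = {}" using Cons.prems by (auto simp: U_def)
  ultimately have "\<gamma> (C \<inter> U (p # r)) = \<tau> (\<gamma> (C \<inter> snd p)) (\<gamma> (C \<inter> U r))"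
    using Cons.prems by (simp add: gun Int_S U_S)
  then show ?case using Cons by simp
qed

lemma I_D: "goodrep \<Sigma> r \<Longrightarrow> I \<tau> \<gamma> E r \<in> DeltaPlus"
  unfolding I_def
proof (induction r)
  case (Cons p r)
  have "smult (fst p) (\<gamma> (E \<inter> snd p)) \<in> DeltaPlus"
    using Cons.prems E by (intro smult_D gD Int_S) auto
  then show ?case using Cons by (simp add: t_D[OF tf dist])
qed (simp add: eps0_D)

end



context
  fixes \<tau> :: "dfun \<Rightarrow> dfun \<Rightarrow> dfun" and \<Omega> :: "'a set" and \<Sigma> :: "'a set set"
    and \<gamma> :: "'a set \<Rightarrow> dfun" and E :: "'a set"
  assumes tf: "triangle_function \<tau>" and dist: "distributive_tf \<tau>"
    and ring: "ring_of_sets \<Omega> \<Sigma>" and dec: "tau_decomposable \<tau> \<Sigma> \<gamma>" and E: "E \<in> \<Sigma>"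
begin

lemmas ctx = tf dist ring dec E
lemma Int_S': "A \<in> \<Sigma> \<Longrightarrow> B \<in> \<Sigma> \<Longrightarrow> A \<inter> B \<in> \<Sigma>" by (rule Int_S[OF ctx])
lemma Diff_S': "A \<in> \<Sigma> \<Longrightarrow> B \<in> \<Sigma> \<Longrightarrow> A - B \<in> \<Sigma>" by (rule Diff_S[OF ctx])
lemma gD': "A \<in> \<Sigma> \<Longrightarrow> \<gamma> A \<in> DeltaPlus" by (rule gD[OF ctx])

lemma good_map_Int: "goodrep \<Sigma> r \<Longrightarrow> B \<in> \<Sigma> \<Longrightarrow> goodrep \<Sigma> (map (\<lambda>p. (fst p, B \<inter> snd p)) r)"
  by (induction r) (auto intro: Int_S')
lemma good_map_Diff: "goodrep \<Sigma> r \<Longrightarrow> B \<in> \<Sigma> \<Longrightarrow> goodrep \<Sigma> (map (\<lambda>p. (fst p, snd p - B)) r)"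
  by (induction r) (auto intro: Diff_S')
lemma val_map_Diff: "val (map (\<lambda>p. (fst p, snd p - B)) r) \<omega> = (if \<omega> \<in> B then 0 else val r \<omega>)"
  by (induction r) (auto simp: indicator_def)

lemma foldr_eps0: "foldr \<tau> (map (\<lambda>_. eps0) r) eps0 = eps0"
  by (induction r) (auto simp: t_unit[OF tf dist] eps0_D)

lemma main:
  assumes "goodrep \<Sigma> rg" "goodrep \<Sigma> rf" "\<forall>\<omega>\<in>\<Omega>. val rf \<omega> \<le> val rg \<omega>"
  shows "I \<tau> \<gamma> E rg \<le> I \<tau> \<gamma> E rf"
  using assms
proof (induction rg arbitrary: rf)
  case Nil
  have rfS: "\<And>p. p \<in> set rf \<Longrightarrow> snd p \<in> \<Sigma> \<and> 0 \<le> fst p"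
    using Nil(2) by (induction rf) auto
  have "eps0 = foldr \<tau> (map (\<lambda>_. eps0) rf) eps0" by (simp add: foldr_eps0)
  also have "\<dots> \<le> I \<tau> \<gamma> E rf" unfolding I_def
  proof (intro foldr_mono[OF tf dist])
    fix p assume p: "p \<in> set rf"
    have "smult (fst p) (\<gamma> (E \<inter> snd p)) = eps0"
    proof (cases "E \<inter> snd p = {}")
      case True then show ?thesis using rfS[OF p] by (simp add: gemp[OF ctx] smult_eps0)
    next
      case False
      then obtain \<omega> where w: "\<omega> \<in> snd p" by blast
      have "\<omega> \<in> \<Omega>" using w rfS[OF p] sub_S[OF ctx] by blast
      then have "fst p \<le> 0" using val_in[OF Nil(2) p w] Nil(3) by auto
      then have "fst p = 0" using rfS[OF p] by simp
      then show ?thesis by (simp add: smult_def)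
    qed
    then show "eps0 \<in> DeltaPlus \<and> smult (fst p) (\<gamma> (E \<inter> snd p)) \<in> DeltaPlus \<and> eps0 \<le> smult (fst p) (\<gamma> (E \<inter> snd p))"
      by (simp add: eps0_D)
  qed
  finally show ?case by (simp add: I_def)
next
  case (Cons q rest)
  obtain y B where q: "q = (y, B)" by (cases q)
  have y: "0 \<le> y" and B: "B \<in> \<Sigma>" and disj: "\<forall>p\<in>set rest. B \<inter> snd p = {}"
    and gr: "goodrep \<Sigma> rest" using Cons.prems(1) q by auto
  define rf1 where "rf1 = map (\<lambda>p. (fst p, B \<inter> snd p)) rf"
  define rf2 where "rf2 = map (\<lambda>p. (fst p, snd p - B)) rf"
  have g1: "goodrep \<Sigma> rf1" and g2: "goodrep \<Sigma> rf2"
    using Cons.prems(2) B by (auto simp: rf1_def rf2_def intro: good_map_Int good_map_Diff)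
  have rfS: "\<And>p. p \<in> set rf \<Longrightarrow> snd p \<in> \<Sigma> \<and> 0 \<le> fst p"
    using Cons.prems(2) by (induction rf) auto
  have vrest: "val rest \<omega> = 0" if "\<omega> \<in> B" for \<omega>
    using disj that by (intro val_out) auto
  have "\<forall>\<omega>\<in>\<Omega>. val rf2 \<omega> \<le> val rest \<omega>"
  proof
    fix \<omega> assume w: "\<omega> \<in> \<Omega>"
    show "val rf2 \<omega> \<le> val rest \<omega>"
    proof (cases "\<omega> \<in> B")
      case True then show ?thesis by (simp add: rf2_def val_map_Diff vrest)
    next
      case False
      have "val rf \<omega> \<le> val (q # rest) \<omega>" using Cons.prems(3) w by blast
      then show ?thesis using False q by (simp add: rf2_def val_map_Diff)
    qed
  qed
  then have IH: "I \<tau> \<gamma> E rest \<le> I \<tau> \<gamma> E rf2" using Cons.IH gr g2 by blast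
  have split: "I \<tau> \<gamma> E rf = \<tau> (I \<tau> \<gamma> E rf1) (I \<tau> \<gamma> E rf2)"
  proof -
    have "I \<tau> \<gamma> E rf = foldr \<tau> (map (\<lambda>p. \<tau> (smult (fst p) (\<gamma> (E \<inter> (B \<inter> snd p))))
                     (smult (fst p) (\<gamma> (E \<inter> (snd p - B))))) rf) eps0"
      unfolding I_def
    proof (intro arg_cong[where f="\<lambda>l. foldr \<tau> l eps0"] map_cong refl)
      fix p assume p: "p \<in> set rf"
      have "E \<inter> snd p \<inter> B = E \<inter> (B \<inter> snd p)" "E \<inter> snd p - B = E \<inter> (snd p - B)" by auto
      then have "\<gamma> (E \<inter> snd p) = \<tau> (\<gamma> (E \<inter> (B \<inter> snd p))) (\<gamma> (E \<inter> (snd p - B)))"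
        using gsplit[OF ctx Int_S'[OF E] B, of "snd p"] rfS[OF p] by simp
      then show "smult (fst p) (\<gamma> (E \<inter> snd p)) = \<tau> (smult (fst p) (\<gamma> (E \<inter> (B \<inter> snd p))))
                     (smult (fst p) (\<gamma> (E \<inter> (snd p - B))))"
        using rfS[OF p] B E by (simp add: t_dist[OF tf dist] gD' Int_S' Diff_S')
    qed
    also have "\<dots> = \<tau> (I \<tau> \<gamma> E rf1) (I \<tau> \<gamma> E rf2)"
      unfolding I_def rf1_def rf2_def
      by (subst foldr_split[OF tf dist]) (auto simp: o_def intro!: smult_D gD' Int_S' Diff_S' E B dest: rfS)
    finally show ?thesis .
  qed
  define C where "C = E \<inter> B"
  have C: "C \<in> \<Sigma>" using E B by (simp add: C_def Int_S')
  have US: "U rf \<in> \<Sigma>" by (rule U_S[OF ctx Cons.prems(2)])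
  have "\<gamma> C = \<tau> (\<gamma> (C \<inter> U rf)) (\<gamma> (C - U rf))" by (rule gsplit[OF ctx C US])
  also have "\<dots> \<le> \<tau> (\<gamma> (C \<inter> U rf)) eps0"
    by (intro t_mono[OF tf dist] gD' Int_S' Diff_S' C US eps0_D order_refl le_eps0)
  also have "\<dots> = \<gamma> (C \<inter> U rf)" by (intro t_unit[OF tf dist] gD' Int_S' C US)
  finally have "smult y (\<gamma> C) \<le> smult y (\<gamma> (C \<inter> U rf))" by (rule smult_mono)
  also have "\<gamma> (C \<inter> U rf) = foldr \<tau> (map (\<lambda>p. \<gamma> (C \<inter> snd p)) rf) eps0"
    by (rule gunion[OF ctx Cons.prems(2) C, symmetric])
  also have "smult y \<dots> = foldr \<tau> (map (\<lambda>p. smult y (\<gamma> (C \<inter> snd p))) rf) eps0"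
    using y by (intro foldr_smult[OF tf dist]) (auto intro!: gD' Int_S' C dest: rfS)
  also have "\<dots> \<le> foldr \<tau> (map (\<lambda>p. smult (fst p) (\<gamma> (E \<inter> (B \<inter> snd p)))) rf) eps0"
  proof (intro foldr_mono[OF tf dist])
    fix p assume p: "p \<in> set rf"
    have CA: "C \<inter> snd p = E \<inter> (B \<inter> snd p)" by (auto simp: C_def)
    have D1: "smult y (\<gamma> (C \<inter> snd p)) \<in> DeltaPlus"
      using y p by (intro smult_D gD' Int_S' C) (auto dest: rfS)
    have D2: "smult (fst p) (\<gamma> (E \<inter> (B \<inter> snd p))) \<in> DeltaPlus"
      using p by (intro smult_D gD' Int_S' E B) (auto dest: rfS)
    have "smult y (\<gamma> (C \<inter> snd p)) \<le> smult (fst p) (\<gamma> (E \<inter> (B \<inter> snd p)))"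
    proof (cases "C \<inter> snd p = {}")
      case True
      then show ?thesis using CA y rfS[OF p] by (simp add: gemp[OF ctx] smult_eps0)
    next
      case False
      then obtain \<omega> where w: "\<omega> \<in> C" "\<omega> \<in> snd p" by blast
      have wO: "\<omega> \<in> \<Omega>" using w C sub_S[OF ctx] by blast
      have "val rf \<omega> = fst p" by (rule val_in[OF Cons.prems(2) p w(2)])
      moreover have "val (q # rest) \<omega> = y" using w q vrest by (simp add: C_def)
      ultimately have "fst p \<le> y" using Cons.prems(3) wO by metis
      then show ?thesis unfolding CA using rfS[OF p] by (intro smult_anti gD' Int_S' E B) auto
    qed
    then show "smult y (\<gamma> (C \<inter> snd p)) \<in> DeltaPlus \<and>
          smult (fst p) (\<gamma> (E \<inter> (B \<inter> snd p))) \<in> DeltaPlus \<and>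
          smult y (\<gamma> (C \<inter> snd p)) \<le> smult (fst p) (\<gamma> (E \<inter> (B \<inter> snd p)))"
      using D1 D2 by simp
  qed
  also have "\<dots> = I \<tau> \<gamma> E rf1" by (simp add: I_def rf1_def o_def)
  finally have bound: "smult y (\<gamma> (E \<inter> B)) \<le> I \<tau> \<gamma> E rf1" by (simp add: C_def)
  have "I \<tau> \<gamma> E (q # rest) = \<tau> (smult y (\<gamma> (E \<inter> B))) (I \<tau> \<gamma> E rest)"
    by (simp add: I_def q)
  also have "\<dots> \<le> \<tau> (I \<tau> \<gamma> E rf1) (I \<tau> \<gamma> E rf2)"
  proof (rule t_mono[OF tf dist])
    show "smult y (\<gamma> (E \<inter> B)) \<in> DeltaPlus" using y B E by (intro smult_D gD' Int_S')
    show "I \<tau> \<gamma> E rf1 \<in> DeltaPlus" by (rule I_D[OF ctx g1])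
    show "I \<tau> \<gamma> E rest \<in> DeltaPlus" by (rule I_D[OF ctx gr])
    show "I \<tau> \<gamma> E rf2 \<in> DeltaPlus" by (rule I_D[OF ctx g2])
  qed (fact bound IH)+
  also have "\<dots> = I \<tau> \<gamma> E rf" by (rule split[symmetric])
  finally show ?case .
qed

end


theorem theorem4p4:
  fixes \<tau> :: "dfun \<Rightarrow> dfun \<Rightarrow> dfun" and \<Omega> :: "'a set" and \<Sigma> :: "'a set set"
    and \<gamma> :: "'a set \<Rightarrow> dfun" and f g :: "'a \<Rightarrow> real"
  assumes "triangle_function \<tau>" and "distributive_tf \<tau>"
    and "ring_of_sets \<Omega> \<Sigma>" and "\<Omega> \<noteq> {}"
    and "tau_decomposable \<tau> \<Sigma> \<gamma>"
    and "simple_fun \<Omega> \<Sigma> f" and "simple_fun \<Omega> \<Sigma> g"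
    and "\<forall>\<omega>\<in>\<Omega>. f \<omega> \<le> g \<omega>"
    and "E \<in> \<Sigma>"
  shows "tau_integral \<tau> \<Omega> \<Sigma> \<gamma> E g \<le> tau_integral \<tau> \<Omega> \<Sigma> \<gamma> E f"
proof -
  note ctx = assms(1,2,3,5,9)
  have eq: "tau_integral \<tau> \<Omega> \<Sigma> \<gamma> E h = I \<tau> \<gamma> E (SOME rep. simple_rep \<Omega> \<Sigma> h rep)
     \<and> goodrep \<Sigma> (SOME rep. simple_rep \<Omega> \<Sigma> h rep)
     \<and> (\<forall>\<omega>\<in>\<Omega>. h \<omega> = val (SOME rep. simple_rep \<Omega> \<Sigma> h rep) \<omega>)"
    if "simple_fun \<Omega> \<Sigma> h" for h
  proof -
    define r where "r = (SOME rep. simple_rep \<Omega> \<Sigma> h rep)"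
    have sr: "simple_rep \<Omega> \<Sigma> h r" using that unfolding simple_fun_def r_def by (rule someI_ex)
    note gv = simple_rep_good[OF sr]
    have rS: "\<And>p. p \<in> set r \<Longrightarrow> snd p \<in> \<Sigma> \<and> 0 \<le> fst p"
      using conjunct1[OF gv] by (induction r) auto
    have "set (map (\<lambda>p. smult (fst p) (\<gamma> (E \<inter> snd p))) r) \<subseteq> DeltaPlus"
      using rS assms(9) by (auto intro!: smult_D gD[OF ctx] Int_S[OF ctx])
    then have "tau_integral \<tau> \<Omega> \<Sigma> \<gamma> E h = I \<tau> \<gamma> E r"
      unfolding tau_integral_def Let_def r_def[symmetric] I_def
      by (simp add: split_def bo_foldr[OF assms(1,2)])
    then show ?thesis using gv r_def by simp
  qed
  note eg = eq[OF assms(7)] and ef = eq[OF assms(6)]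
  have "I \<tau> \<gamma> E (SOME rep. simple_rep \<Omega> \<Sigma> g rep) \<le> I \<tau> \<gamma> E (SOME rep. simple_rep \<Omega> \<Sigma> f rep)"
    using eg ef assms(8) by (intro main[OF ctx]) auto
  then show ?thesis using eg ef by simp
qed

end
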